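(* Let $(F,+,\cdot)$ be a Field with Unity $1$ and additive identity $0$, and let $(\mathbb S,+_{\mathbb S},\cdot_{\mathbb S})$ be the structure on $\mathbb S=F\times F$ described in the context. Then $(\mathbb S,+_{\mathbb S},\cdot_{\mathbb S})$ is an S-Field with $(\mathbb S_0,+_{\mathbb S},\cdot_{\mathbb S})\cong(F,+,\cdot)$; that is, $(\mathbb S,+_{\mathbb S},\cdot_{\mathbb S})$ is a Proper S-Field Extension of $(F,+,\cdot)$.
   Context: Construction: $\mathbb S=F\times F=\{(x,y):x,y\in F\}$, with $\mathbf 0=(0,0)$ and distinguished element $\mathbf 1=(1,0)$, and operations $(x,y)+_{\mathbb S}(u,v)=(x+u,\,y+v)$ and $(x,y)\cdot_{\mathbb S}(u,v)=(x\cdot u+y+v-x\cdot v-y\cdot u,\;y\cdot v+x\cdot v+y\cdot u)$. General definitions (written for a structure $(\mathbb S,+,\cdot)$ with zero $0$ and distinguished element $1$): An S-Structure is a triple $(\mathbb S,+,\cdot)$ where $+,\cdot$ are binary operations on the set $\mathbb S$ such that $(\mathbb S,+)$ is a commutative group with identity $0$ (inverse $-s$, $s-t:=s+(-t)$), $\mathbb S$ is closed under $\cdot$, and there is $s\in\mathbb S$ with $0\cdot s\neq0$ or $s\cdot0\neq0$. Commutative: $s\cdot t=t\cdot s$ for all $s,t$. For $\alpha\in\mathbb S$: $\mathbb S_\alpha=\{s:0\cdot s=s\cdot0=\alpha\}$, $\Lambda=\{\alpha:\mathbb S_\alpha\neq\emptyset\}$. Wheel Distributive: $s\cdot(t+r)+(s\cdot0)=(s\cdot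 t)+(s\cdot r)$ for all $s,t,r$. S-Associative: for all $m,n\in\mathbb S_0$, $s\in\mathbb S$, $m\cdot(n\cdot s)=(m\cdot n)\cdot s-([(m-1)\cdot(n-1)]\cdot(0\cdot s))$. Base: if $\mathbb S_0\neq\emptyset$, $\alpha\in\Lambda$, then $q\in\mathbb S_\alpha$ is a Base for $\mathbb S_\alpha$ if $q+\beta\in\mathbb S_\alpha$ for all $\beta\in\mathbb S_0$ and each $s\in\mathbb S_\alpha$ is $q+\beta$ for some $\beta\in\mathbb S_0$; Coordinated: $\mathbb S_0\neq\emptyset$ and each $\mathbb S_\alpha$, $\alpha\in\Lambda$, has a Base. Standard Bases (for a Coordinated Commutative S-Structure): there is a specified $q_0(1)\in\mathbb S_1$ which is a Base for $\mathbb S_1$, and for each $\alpha\in\Lambda$, $q_0(\alpha):=\alpha\cdot(q_0(1)+1)-1$ lies in $\mathbb S_\alpha$ and is a Base for $\mathbb S_\alpha$. Essential S-Structure: Commutative, Wheel Distributive, S-Associative, has Standard Bases, $0,1\in\mathbb S_0$, and $\mathbb S_0=\{1\cdot x:x\in\mathbb S_0\}$. Unity: $e\in\Lambda$ with $e\cdot s=s\cdot e=s$ for all $s$. Scalar Inverses: there is a Unity $e$ and every nonzero $x\in\mathbb S_0$ has $x^{-1}\in\mathbb S_0$ with $x\cdot x^{-1}=x^{-1}\cdot x=e$. S-Ring: Essential S-Structure with a Unity. S-Field: S-Ring with Scalar Inverses. S-Extension: $(\mathbb S,+,\cdot)$ is an S-Extension of $(F,+_F,\cdot_F)$ if $F$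 is closed under $+_F$ and $\cdot_F$, $(\mathbb S,+,\cdot)$ is an S-Structure, and there is $F_{\mathbb S}\subset\mathbb S$ and an isomorphism $\phi:(F,+_F,\cdot_F)\to(F_{\mathbb S},+,\cdot)$. It is a Proper S-Extension if moreover $(\mathbb S_0,+,\cdot)\cong(F,+_F,\cdot_F)$. A Proper S-Field Extension is an S-Field that is a Proper S-Extension. *)

theory Defs
  imports Main
begin

definition is_comm_group :: "'b set \<Rightarrow> ('b \<Rightarrow> 'b \<Rightarrow> 'b) \<Rightarrow> 'b \<Rightarrow> bool" where
  "is_comm_group S add z \<longleftrightarrow>
     z \<in> S \<and>
     (\<forall>s\<in>S. \<forall>t\<in>S. add s t \<in> S) \<and>
     (\<forall>s\<in>S. \<forall>t\<in>S. \<forall>r\<in>S. add (add s t) r = add s (add t r)) \<and>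
     (\<forall>s\<in>S. \<forall>t\<in>S. add s t = add t s) \<and>
     (\<forall>s\<in>S. add z s = s \<and> add s z = s) \<and>
     (\<forall>s\<in>S. \<exists>t\<in>S. add s t = z \<and> add t s = z)"

definition sneg :: "'b set \<Rightarrow> ('b \<Rightarrow> 'b \<Rightarrow> 'b) \<Rightarrow> 'b \<Rightarrow> 'b \<Rightarrow> 'b" where
  "sneg S add z s = (THE t. t \<in> S \<and> add s t = z)"

definition ssub :: "'b set \<Rightarrow> ('b \<Rightarrow> 'b \<Rightarrow> 'b) \<Rightarrow> 'b \<Rightarrow> 'b \<Rightarrow> 'b \<Rightarrow> 'b" where
  "ssub S add z s t = add s (sneg S add z t)"

definition S_structure :: "'b set \<Rightarrow> ('b \<Rightarrow> 'b \<Rightarrow> 'b) \<Rightarrow> ('b \<Rightarrow> 'b \<Rightarrow> 'b) \<Rightarrow> 'b \<Rightarrow> bool" where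
  "S_structure S add mul z \<longleftrightarrow>
     is_comm_group S add z \<and>
     (\<forall>s\<in>S. \<forall>t\<in>S. mul s t \<in> S) \<and>
     (\<exists>s\<in>S. mul z s \<noteq> z \<or> mul s z \<noteq> z)"

definition S_commutative :: "'b set \<Rightarrow> ('b \<Rightarrow> 'b \<Rightarrow> 'b) \<Rightarrow> bool" where
  "S_commutative S mul \<longleftrightarrow> (\<forall>s\<in>S. \<forall>t\<in>S. mul s t = mul t s)"

definition S_alpha :: "'b set \<Rightarrow> ('b \<Rightarrow> 'b \<Rightarrow> 'b) \<Rightarrow> 'b \<Rightarrow> 'b \<Rightarrow> 'b set" where
  "S_alpha S mul z \<alpha> = {s \<in> S. mul z s = \<alpha> \<and> mul s z = \<alpha>}"

definition S_Lambda :: "'b set \<Rightarrow> ('b \<Rightarrow> 'b \<Rightarrow> 'b) \<Rightarrow> 'b \<Rightarrow> 'b set" where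
  "S_Lambda S mul z = {\<alpha> \<in> S. S_alpha S mul z \<alpha> \<noteq> {}}"

definition wheel_distributive :: "'b set \<Rightarrow> ('b \<Rightarrow> 'b \<Rightarrow> 'b) \<Rightarrow> ('b \<Rightarrow> 'b \<Rightarrow> 'b) \<Rightarrow> 'b \<Rightarrow> bool" where
  "wheel_distributive S add mul z \<longleftrightarrow>
     (\<forall>s\<in>S. \<forall>t\<in>S. \<forall>r\<in>S. add (mul s (add t r)) (mul s z) = add (mul s t) (mul s r))"

definition S_associative :: "'b set \<Rightarrow> ('b \<Rightarrow> 'b \<Rightarrow> 'b) \<Rightarrow> ('b \<Rightarrow> 'b \<Rightarrow> 'b) \<Rightarrow> 'b \<Rightarrow> 'b \<Rightarrow> bool" where
  "S_associative S add mul z one \<longleftrightarrow>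
     (\<forall>m\<in>S_alpha S mul z z. \<forall>n\<in>S_alpha S mul z z. \<forall>s\<in>S.
        mul m (mul n s) =
        ssub S add z (mul (mul m n) s)
          (mul (mul (ssub S add z m one) (ssub S add z n one)) (mul z s)))"

definition is_base :: "'b set \<Rightarrow> ('b \<Rightarrow> 'b \<Rightarrow> 'b) \<Rightarrow> ('b \<Rightarrow> 'b \<Rightarrow> 'b) \<Rightarrow> 'b \<Rightarrow> 'b \<Rightarrow> 'b \<Rightarrow> bool" where
  "is_base S add mul z \<alpha> q \<longleftrightarrow>
     S_alpha S mul z z \<noteq> {} \<and> \<alpha> \<in> S_Lambda S mul z \<and>
     q \<in> S_alpha S mul z \<alpha> \<and>
     (\<forall>\<beta>\<in>S_alpha S mul z z. add q \<beta> \<in> S_alpha S mul z \<alpha>) \<and>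
     (\<forall>s\<in>S_alpha S mul z \<alpha>. \<exists>\<beta>\<in>S_alpha S mul z z. s = add q \<beta>)"

definition coordinated :: "'b set \<Rightarrow> ('b \<Rightarrow> 'b \<Rightarrow> 'b) \<Rightarrow> ('b \<Rightarrow> 'b \<Rightarrow> 'b) \<Rightarrow> 'b \<Rightarrow> bool" where
  "coordinated S add mul z \<longleftrightarrow>
     S_alpha S mul z z \<noteq> {} \<and> (\<forall>\<alpha>\<in>S_Lambda S mul z. \<exists>q. is_base S add mul z \<alpha> q)"

definition standard_bases :: "'b set \<Rightarrow> ('b \<Rightarrow> 'b \<Rightarrow> 'b) \<Rightarrow> ('b \<Rightarrow> 'b \<Rightarrow> 'b) \<Rightarrow> 'b \<Rightarrow> 'b \<Rightarrow> bool" where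
  "standard_bases S add mul z one \<longleftrightarrow>
     coordinated S add mul z \<and> S_commutative S mul \<and>
     (\<exists>q1. q1 \<in> S_alpha S mul z one \<and> is_base S add mul z one q1 \<and>
        (\<forall>\<alpha>\<in>S_Lambda S mul z.
           ssub S add z (mul \<alpha> (add q1 one)) one \<in> S_alpha S mul z \<alpha> \<and>
           is_base S add mul z \<alpha> (ssub S add z (mul \<alpha> (add q1 one)) one)))"

definition essential_S_structure :: "'b set \<Rightarrow> ('b \<Rightarrow> 'b \<Rightarrow> 'b) \<Rightarrow> ('b \<Rightarrow> 'b \<Rightarrow> 'b) \<Rightarrow> 'b \<Rightarrow> 'b \<Rightarrow> bool" where
  "essential_S_structure S add mul z one \<longleftrightarrow>
     S_structure S add mul z \<and> one \<in> S \<and>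
     S_commutative S mul \<and> wheel_distributive S add mul z \<and>
     S_associative S add mul z one \<and> standard_bases S add mul z one \<and>
     z \<in> S_alpha S mul z z \<and> one \<in> S_alpha S mul z z \<and>
     S_alpha S mul z z = {mul one x | x. x \<in> S_alpha S mul z z}"

definition is_unity :: "'b set \<Rightarrow> ('b \<Rightarrow> 'b \<Rightarrow> 'b) \<Rightarrow> 'b \<Rightarrow> 'b \<Rightarrow> bool" where
  "is_unity S mul z e \<longleftrightarrow> e \<in> S_Lambda S mul z \<and> (\<forall>s\<in>S. mul e s = s \<and> mul s e = s)"

definition scalar_inverses :: "'b set \<Rightarrow> ('b \<Rightarrow> 'b \<Rightarrow> 'b) \<Rightarrow> 'b \<Rightarrow> bool" where
  "scalar_inverses S mul z \<longleftrightarrow>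
     (\<exists>e. is_unity S mul z e \<and>
        (\<forall>x\<in>S_alpha S mul z z. x \<noteq> z \<longrightarrow>
           (\<exists>y\<in>S_alpha S mul z z. mul x y = e \<and> mul y x = e)))"

definition S_ring :: "'b set \<Rightarrow> ('b \<Rightarrow> 'b \<Rightarrow> 'b) \<Rightarrow> ('b \<Rightarrow> 'b \<Rightarrow> 'b) \<Rightarrow> 'b \<Rightarrow> 'b \<Rightarrow> bool" where
  "S_ring S add mul z one \<longleftrightarrow> essential_S_structure S add mul z one \<and> (\<exists>e. is_unity S mul z e)"

definition S_field :: "'b set \<Rightarrow> ('b \<Rightarrow> 'b \<Rightarrow> 'b) \<Rightarrow> ('b \<Rightarrow> 'b \<Rightarrow> 'b) \<Rightarrow> 'b \<Rightarrow> 'b \<Rightarrow> bool" where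
  "S_field S add mul z one \<longleftrightarrow> S_ring S add mul z one \<and> scalar_inverses S mul z"

definition iso2 :: "('a \<Rightarrow> 'b) \<Rightarrow> 'a set \<Rightarrow> ('a \<Rightarrow> 'a \<Rightarrow> 'a) \<Rightarrow> ('a \<Rightarrow> 'a \<Rightarrow> 'a)
                     \<Rightarrow> 'b set \<Rightarrow> ('b \<Rightarrow> 'b \<Rightarrow> 'b) \<Rightarrow> ('b \<Rightarrow> 'b \<Rightarrow> 'b) \<Rightarrow> bool" where
  "iso2 \<phi> A addA mulA B addB mulB \<longleftrightarrow>
     bij_betw \<phi> A B \<and>
     (\<forall>x\<in>A. \<forall>y\<in>A. \<phi> (addA x y) = addB (\<phi> x) (\<phi> y) \<and> \<phi> (mulA x y) = mulB (\<phi> x) (\<phi> y))"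

definition S_extension :: "'b set \<Rightarrow> ('b \<Rightarrow> 'b \<Rightarrow> 'b) \<Rightarrow> ('b \<Rightarrow> 'b \<Rightarrow> 'b) \<Rightarrow> 'b \<Rightarrow>
                           'a set \<Rightarrow> ('a \<Rightarrow> 'a \<Rightarrow> 'a) \<Rightarrow> ('a \<Rightarrow> 'a \<Rightarrow> 'a) \<Rightarrow> bool" where
  "S_extension S add mul z F addF mulF \<longleftrightarrow>
     (\<forall>x\<in>F. \<forall>y\<in>F. addF x y \<in> F \<and> mulF x y \<in> F) \<and>
     S_structure S add mul z \<and>
     (\<exists>FS \<phi>. FS \<subseteq> S \<and> iso2 \<phi> F addF mulF FS add mul)"

definition proper_S_extension :: "'b set \<Rightarrow> ('b \<Rightarrow> 'b \<Rightarrow> 'b) \<Rightarrow> ('b \<Rightarrow> 'b \<Rightarrow> 'b) \<Rightarrow> 'b \<Rightarrow>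
                           'a set \<Rightarrow> ('a \<Rightarrow> 'a \<Rightarrow> 'a) \<Rightarrow> ('a \<Rightarrow> 'a \<Rightarrow> 'a) \<Rightarrow> bool" where
  "proper_S_extension S add mul z F addF mulF \<longleftrightarrow>
     S_extension S add mul z F addF mulF \<and>
     (\<exists>\<psi>. iso2 \<psi> F addF mulF (S_alpha S mul z z) add mul)"

definition proper_S_field_extension :: "'b set \<Rightarrow> ('b \<Rightarrow> 'b \<Rightarrow> 'b) \<Rightarrow> ('b \<Rightarrow> 'b \<Rightarrow> 'b) \<Rightarrow> 'b \<Rightarrow> 'b \<Rightarrow>
                           'a set \<Rightarrow> ('a \<Rightarrow> 'a \<Rightarrow> 'a) \<Rightarrow> ('a \<Rightarrow> 'a \<Rightarrow> 'a) \<Rightarrow> bool" where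
  "proper_S_field_extension S add mul z one F addF mulF \<longleftrightarrow>
     S_field S add mul z one \<and> proper_S_extension S add mul z F addF mulF"

definition pplus :: "'a::field \<times> 'a \<Rightarrow> 'a \<times> 'a \<Rightarrow> 'a \<times> 'a" where
  "pplus p q = (case p of (x, y) \<Rightarrow> case q of (u, v) \<Rightarrow> (x + u, y + v))"

definition ptimes :: "'a::field \<times> 'a \<Rightarrow> 'a \<times> 'a \<Rightarrow> 'a \<times> 'a" where
  "ptimes p q = (case p of (x, y) \<Rightarrow> case q of (u, v) \<Rightarrow>
      (x * u + y + v - x * v - y * u, y * v + x * v + y * u))"

end

theory Submission
  imports Defs
begin

lemma pt: "ptimes (x,y) (u,v) = (x * u + y + v - x * v - y * u, y * v + x * v + y * u)"
  by (simp add: ptimes_def)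
lemma pp: "pplus (x,y) (u,v) = (x + u, y + v)"
  by (simp add: pplus_def)

lemma mem_alpha:
  "(s :: 'a::field \<times> 'a) \<in> S_alpha UNIV ptimes (0,0) \<alpha> \<longleftrightarrow> snd \<alpha> = 0 \<and> snd s = fst \<alpha>"
  by (cases s; cases \<alpha>) (auto simp: S_alpha_def pt)

lemma lam: "S_Lambda (UNIV :: ('a::field \<times> 'a) set) ptimes (0,0) = {\<alpha>. snd \<alpha> = 0}"
proof -
  have "\<And>\<alpha>::'a\<times>'a. S_alpha UNIV ptimes (0,0) \<alpha> \<noteq> {} \<longleftrightarrow> snd \<alpha> = 0"
  proof
    fix \<alpha> :: "'a\<times>'a"
    assume "S_alpha UNIV ptimes (0,0) \<alpha> \<noteq> {}" then show "snd \<alpha> = 0"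
      using mem_alpha by blast
  next
    fix \<alpha> :: "'a\<times>'a"
    assume "snd \<alpha> = 0"
    then have "(0, fst \<alpha>) \<in> S_alpha UNIV ptimes (0,0) \<alpha>" by (simp add: mem_alpha)
    then show "S_alpha UNIV ptimes (0,0) \<alpha> \<noteq> {}" by blast
  qed
  then show ?thesis unfolding S_Lambda_def by blast
qed

lemma sneg_eq: "sneg (UNIV :: ('a::field \<times> 'a) set) pplus (0,0) s = (- fst s, - snd s)"
  unfolding sneg_def
proof (rule the_equality)
  show "(- fst s, - snd s) \<in> UNIV \<and> pplus s (- fst s, - snd s) = (0,0)"
    by (cases s) (simp add: pp)
  fix t :: "'a \<times> 'a"
  assume "t \<in> UNIV \<and> pplus s t = (0,0)"
  then have "pplus s t = (0,0)" by simp
  then show "t = (- fst s, - snd s)"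
    by (cases s; cases t) (simp add: pp eq_neg_iff_add_eq_0 add.commute)
qed

lemma ssub_eq: "ssub (UNIV :: ('a::field \<times> 'a) set) pplus (0,0) s t = (fst s - fst t, snd s - snd t)"
  by (cases s; cases t) (simp add: ssub_def sneg_eq pp)

lemma alpha0: "S_alpha (UNIV :: ('a::field \<times> 'a) set) ptimes (0,0) (0,0) = {s. snd s = 0}"
  by (auto simp: mem_alpha)

lemma alpha0_ne: "S_alpha (UNIV :: ('a::field \<times> 'a) set) ptimes (0,0) (0,0) \<noteq> {}"
proof -
  have "((0::'a),(0::'a)) \<in> S_alpha UNIV ptimes (0,0) (0,0)" by (simp add: mem_alpha)
  then show ?thesis by blast
qed

theorem theorem3p4p2:
  shows "proper_S_field_extension (UNIV :: ('a::field \<times> 'a) set) pplus ptimes (0, 0) (1, 0)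
           (UNIV :: 'a set) (+) (*)"
proof -
  let ?S = "UNIV :: ('a \<times> 'a) set"
  have grp: "is_comm_group ?S pplus (0,0)"
    unfolding is_comm_group_def
  proof (intro conjI ballI)
    fix s :: "'a\<times>'a"
    show "\<exists>t\<in>?S. pplus s t = (0,0) \<and> pplus t s = (0,0)"
      by (rule bexI[of _ "(- fst s, - snd s)"]) (cases s; simp add: pp)+
  next
    fix s t r :: "'a\<times>'a"
    show "pplus (pplus s t) r = pplus s (pplus t r)"
      by (cases s; cases t; cases r) (simp add: pp add.assoc)
    show "pplus s t = pplus t s"
      by (cases s; cases t) (simp add: pp add.commute)
  qed (simp_all add: pplus_def case_prod_unfold)
  have ss: "S_structure ?S pplus ptimes (0,0)"
  proof -
    have "ptimes (0,0) (0::'a,1::'a) \<noteq> (0,0)" by (simp add: pt)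
    then show ?thesis unfolding S_structure_def using grp by blast
  qed
  have comm: "S_commutative ?S ptimes"
    unfolding S_commutative_def by (auto simp: pt algebra_simps)
  have wd: "wheel_distributive ?S pplus ptimes (0,0)"
    unfolding wheel_distributive_def by (auto simp: pt pp algebra_simps)
  have sa: "S_associative ?S pplus ptimes (0,0) (1,0)"
    unfolding S_associative_def
  proof (intro ballI)
    fix m n s :: "'a \<times> 'a"
    assume "m \<in> S_alpha ?S ptimes (0,0) (0,0)" "n \<in> S_alpha ?S ptimes (0,0) (0,0)"
    then obtain a b where m: "m = (a,0)" and n: "n = (b,0)" by (cases m; cases n) (auto simp: alpha0)
    obtain u v where s: "s = (u,v)" by (cases s)
    show "ptimes m (ptimes n s) = ssub ?S pplus (0,0) (ptimes (ptimes m n) s)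
          (ptimes (ptimes (ssub ?S pplus (0,0) m (1,0)) (ssub ?S pplus (0,0) n (1,0))) (ptimes (0,0) s))"
      by (simp add: m n s pt ssub_eq algebra_simps)
  qed
  have base: "is_base ?S pplus ptimes (0,0) \<alpha> (0, fst \<alpha>)" if "snd \<alpha> = 0" for \<alpha> :: "'a\<times>'a"
    unfolding is_base_def
  proof (intro conjI ballI)
    show "S_alpha ?S ptimes (0,0) (0,0) \<noteq> {}" by (rule alpha0_ne)
    show "\<alpha> \<in> S_Lambda ?S ptimes (0,0)" using that lam by auto
    show "(0, fst \<alpha>) \<in> S_alpha ?S ptimes (0,0) \<alpha>" using that by (simp add: mem_alpha)
    fix \<beta> assume "\<beta> \<in> S_alpha ?S ptimes (0,0) (0,0)"
    then show "pplus (0, fst \<alpha>) \<beta> \<in> S_alpha ?S ptimes (0,0) \<alpha>"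
      using that by (cases \<beta>) (simp add: mem_alpha pp)
  next
    fix s assume "s \<in> S_alpha ?S ptimes (0,0) \<alpha>"
    then show "\<exists>\<beta>\<in>S_alpha ?S ptimes (0,0) (0,0). s = pplus (0, fst \<alpha>) \<beta>"
      by (cases s) (auto simp: mem_alpha pp intro!: bexI[of _ "(fst s, 0)"])
  qed
  have coord: "coordinated ?S pplus ptimes (0,0)"
    unfolding coordinated_def
  proof (intro conjI alpha0_ne ballI)
    fix \<alpha> :: "'a\<times>'a" assume "\<alpha> \<in> S_Lambda ?S ptimes (0,0)"
    then have "snd \<alpha> = 0" using lam by auto
    then show "\<exists>q. is_base ?S pplus ptimes (0,0) \<alpha> q" using base by blast
  qed
  have sb: "standard_bases ?S pplus ptimes (0,0) (1,0)"
    unfolding standard_bases_def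
  proof (intro conjI coord comm exI[of _ "(0,1)"] ballI)
    show "(0,1) \<in> S_alpha ?S ptimes (0,0) (1,0)" by (simp add: mem_alpha)
    show "is_base ?S pplus ptimes (0,0) (1,0) (0,1)" using base[of "(1,0)"] by simp
    fix \<alpha> :: "'a\<times>'a" assume "\<alpha> \<in> S_Lambda ?S ptimes (0,0)"
    then have "snd \<alpha> = 0" using lam by auto
    then obtain a where a: "\<alpha> = (a,0)" by (cases \<alpha>) auto
    have eq: "ssub ?S pplus (0,0) (ptimes \<alpha> (pplus (0,1) (1,0))) (1,0) = (0, fst \<alpha>)"
      by (simp add: a pt pp ssub_eq)
    show "ssub ?S pplus (0,0) (ptimes \<alpha> (pplus (0,1) (1,0))) (1,0) \<in> S_alpha ?S ptimes (0,0) \<alpha>"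
      unfolding eq by (simp add: a mem_alpha)
    show "is_base ?S pplus ptimes (0,0) \<alpha> (ssub ?S pplus (0,0) (ptimes \<alpha> (pplus (0,1) (1,0))) (1,0))"
      unfolding eq using base[of \<alpha>] a by simp
  qed
  have unit: "is_unity ?S ptimes (0,0) (1,0)"
    unfolding is_unity_def
  proof (intro conjI ballI)
    show "(1,0) \<in> S_Lambda ?S ptimes (0,0)" unfolding lam by simp
    fix s :: "'a\<times>'a"
    show "ptimes (1,0) s = s" by (cases s) (simp add: pt)
    show "ptimes s (1,0) = s" by (cases s) (simp add: pt)
  qed
  have ess: "essential_S_structure ?S pplus ptimes (0,0) (1,0)"
    unfolding essential_S_structure_def
  proof (intro conjI ss comm wd sa sb)
    have "\<And>x::'a\<times>'a. ptimes (1,0) x = x" by (case_tac x) (simp add: pt)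
    then show "S_alpha ?S ptimes (0,0) (0,0) = {ptimes (1,0) x | x. x \<in> S_alpha ?S ptimes (0,0) (0,0)}"
      by simp
  qed (simp_all add: mem_alpha)
  have si: "scalar_inverses ?S ptimes (0,0)"
    unfolding scalar_inverses_def
  proof (rule exI[of _ "(1,0)"], rule conjI[OF unit], intro ballI impI)
    fix x :: "'a\<times>'a" assume "x \<in> S_alpha ?S ptimes (0,0) (0,0)" "x \<noteq> (0,0)"
    then obtain a where x: "x = (a,0)" "a \<noteq> 0" by (cases x) (auto simp: alpha0)
    show "\<exists>y\<in>S_alpha ?S ptimes (0,0) (0,0). ptimes x y = (1,0) \<and> ptimes y x = (1,0)"
    proof (rule bexI[of _ "(inverse a, 0)"])
      show "ptimes x (inverse a, 0) = (1,0) \<and> ptimes (inverse a, 0) x = (1,0)"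
        unfolding x(1) using x(2) by (simp add: pt)
      show "(inverse a, 0) \<in> S_alpha ?S ptimes (0,0) (0,0)" by (simp add: alpha0)
    qed
  qed
  have rng: "range (\<lambda>x::'a. (x,0)) = S_alpha ?S ptimes (0,0) (0,0)"
  proof
    show "range (\<lambda>x::'a. (x,0)) \<subseteq> S_alpha ?S ptimes (0,0) (0,0)" by (auto simp: alpha0)
    show "S_alpha ?S ptimes (0,0) (0,0) \<subseteq> range (\<lambda>x::'a. (x,0))"
    proof
      fix s :: "'a\<times>'a" assume "s \<in> S_alpha ?S ptimes (0,0) (0,0)"
      then have "s = (fst s, 0)" by (cases s) (simp add: alpha0)
      then show "s \<in> range (\<lambda>x::'a. (x,0))" by (rule image_eqI) simp
    qed
  qed
  have iso: "iso2 (\<lambda>x::'a. (x,0)) UNIV (+) (*) (S_alpha ?S ptimes (0,0) (0,0)) pplus ptimes"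
    unfolding iso2_def bij_betw_def
  proof (intro conjI ballI rng)
    show "inj_on (\<lambda>x::'a. (x,0)) UNIV" by (simp add: inj_on_def)
    fix x y :: 'a
    show "(x + y, 0) = pplus (x,0) (y,0)" by (simp add: pp)
    show "(x * y, 0) = ptimes (x,0) (y,0)" by (simp add: pt)
  qed
  have ext: "proper_S_extension ?S pplus ptimes (0,0) (UNIV :: 'a set) (+) (*)"
    unfolding proper_S_extension_def S_extension_def
  proof (intro conjI ss exI)
    show "\<forall>x\<in>UNIV. \<forall>y\<in>UNIV. x + y \<in> (UNIV :: 'a set) \<and> x * y \<in> (UNIV :: 'a set)" by simp
    show "S_alpha ?S ptimes (0,0) (0,0) \<subseteq> ?S" by simp
    show "iso2 (\<lambda>x::'a. (x,0)) UNIV (+) (*) (S_alpha ?S ptimes (0,0) (0,0)) pplus ptimes" by (rule iso)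
    show "iso2 (\<lambda>x::'a. (x,0)) UNIV (+) (*) (S_alpha ?S ptimes (0,0) (0,0)) pplus ptimes" by (rule iso)
  qed
  show ?thesis
    unfolding proper_S_field_extension_def S_field_def S_ring_def
    by (intro conjI exI[of _ "(1,0)"] ess unit si ext)
qed

end
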